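(* Consider the two-source resistive circuit described in the context with $E_1=E_2=E\neq0$, and with the cross link of resistance $R_3>0$ connected. Let $\mathrm{LCL}(R_1,R_2,R_3)=\mathrm{Loss}/\mathrm{Loss}'$, where $\mathrm{Loss}=i_1^2R_1+i_2^2R_2+i_3^2R_3$ and $\mathrm{Loss}'=(2E)^2/(R_1+R_2)$. Then the LCL increases monotonically as $|R_1-R_2|$ increases: namely, for fixed $R_3>0$ and fixed value $r>0$ of one of the two resistances $R_1,R_2$, if the other resistance equals $r+h$ (respectively $r-h$, with $h<r$), then LCL is a strictly increasing function of $h=|R_1-R_2|\ge 0$.
   Context: The circuit consists of two DC voltage sources $E_1,E_2$ and resistors $R_1,R_2>0$, arranged in a single loop so that, when the cross link is absent, the same current $i_1=i_2=(E_1+E_2)/(R_1+R_2)$ flows through $R_1$ and $R_2$ (and the total loss is $\mathrm{Loss}'=(E_1+E_2)^2/(R_1+R_2)$). When a cross link containing a resistor $R_3>0$ is connected, the currents through $R_1,R_2,R_3$ are $$i_1=\frac{E_1(R_2+R_3)+E_2R_3}{R_1R_2+R_1R_3+R_2R_3},\quad i_2=\frac{E_1R_3+E_2(R_1+R_3)}{R_1R_2+R_1R_3+R_2R_3},\quad i_3=\frac{-E_1R_2+E_2R_1}{R_1R_2+R_1R_3+R_2R_3}.$$ The Loss Cost of the Link (LCL) is the ratio of the total heat loss after adding the link to the total heat loss before adding it. *)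

theory Defs
  imports Complex_Main
begin

definition den :: "real \<Rightarrow> real \<Rightarrow> real \<Rightarrow> real" where
  "den R1 R2 R3 = R1 * R2 + R1 * R3 + R2 * R3"

definition cur1 :: "real \<Rightarrow> real \<Rightarrow> real \<Rightarrow> real \<Rightarrow> real \<Rightarrow> real" where
  "cur1 E1 E2 R1 R2 R3 = (E1 * (R2 + R3) + E2 * R3) / den R1 R2 R3"

definition cur2 :: "real \<Rightarrow> real \<Rightarrow> real \<Rightarrow> real \<Rightarrow> real \<Rightarrow> real" where
  "cur2 E1 E2 R1 R2 R3 = (E1 * R3 + E2 * (R1 + R3)) / den R1 R2 R3"

definition cur3 :: "real \<Rightarrow> real \<Rightarrow> real \<Rightarrow> real \<Rightarrow> real \<Rightarrow> real" where
  "cur3 E1 E2 R1 R2 R3 = (- E1 * R2 + E2 * R1) / den R1 R2 R3"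

definition loss :: "real \<Rightarrow> real \<Rightarrow> real \<Rightarrow> real \<Rightarrow> real \<Rightarrow> real" where
  "loss E1 E2 R1 R2 R3 =
     (cur1 E1 E2 R1 R2 R3)^2 * R1 + (cur2 E1 E2 R1 R2 R3)^2 * R2 + (cur3 E1 E2 R1 R2 R3)^2 * R3"

text \<open>Total heat loss without the cross link.\<close>
definition loss0 :: "real \<Rightarrow> real \<Rightarrow> real \<Rightarrow> real \<Rightarrow> real" where
  "loss0 E1 E2 R1 R2 = (E1 + E2)^2 / (R1 + R2)"

definition LCL :: "real \<Rightarrow> real \<Rightarrow> real \<Rightarrow> real \<Rightarrow> real \<Rightarrow> real" where
  "LCL E1 E2 R1 R2 R3 = loss E1 E2 R1 R2 R3 / loss0 E1 E2 R1 R2"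

end

theory Submission
  imports Defs
begin

lemma LCL_closed:
  assumes "E \<noteq> 0" "a > 0" "b > 0" "c > 0"
  shows "LCL E E a b c = (a+b)*(a+b+4*c)/(4*(a*b+a*c+b*c))"
proof -
  have D: "den a b c > 0" using assms unfolding den_def by (simp add: add_pos_pos)
  have l: "loss E E a b c = E^2*(a+b+4*c)/den a b c"
  proof -
    let ?D = "den a b c"
    have N: "(E*(b+c)+E*c)^2*a + (E*c+E*(a+c))^2*b + (-E*b+E*a)^2*c = E^2*(a+b+4*c)*?D"
      unfolding den_def by (simp add: algebra_simps power2_eq_square)
    have "loss E E a b c = ((E*(b+c)+E*c)^2*a + (E*c+E*(a+c))^2*b + (-E*b+E*a)^2*c) / ?D^2"
      unfolding loss_def cur1_def cur2_def cur3_def by (simp add: power_divide add_divide_distrib[symmetric] diff_divide_distrib[symmetric])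
    also have "\<dots> = E^2*(a+b+4*c)/?D" using D unfolding N by (simp add: power2_eq_square)
    finally show ?thesis .
  qed
  have ab: "a + b > 0" using assms by simp
  have E2: "E^2 > 0" using assms(1) by simp
  have "LCL E E a b c = (E^2*(a+b+4*c)/den a b c) / (4*E^2/(a+b))"
    unfolding LCL_def l loss0_def by (simp add: power2_eq_square algebra_simps)
  also have "\<dots> = (a+b)*(a+b+4*c)/(4*den a b c)"
    using D ab E2 by (simp add: field_simps)
  finally show ?thesis by (simp add: den_def algebra_simps)
qed

lemma frac_lt:
  fixes n1 n2 d1 d2 :: real
  assumes "d1 > 0" "d2 > 0" "n1 * d2 < n2 * d1"
  shows "n1 / d1 < n2 / d2"
  using assms by (simp add: divide_less_eq less_divide_eq field_simps)

lemma key_plus: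
  fixes r c x1 x2 :: real
  assumes "r > 0" "c > 0" "0 \<le> x1" "x1 < x2"
  defines "s1 \<equiv> 2*r + x1" and "s2 \<equiv> 2*r + x2"
  shows "s1*(s1+4*c)*((r+c)*s2 - r^2) < s2*(s2+4*c)*((r+c)*s1 - r^2)"
proof -
  have e: "s2*(s2+4*c)*((r+c)*s1 - r^2) - s1*(s1+4*c)*((r+c)*s2 - r^2)
     = (x2-x1)*((r^2+2*r*c)*(x1+x2) + (r+c)*x1*x2)"
    unfolding s1_def s2_def by (simp add: algebra_simps power2_eq_square)
  have "(r^2+2*r*c)*(x1+x2) > 0" using assms by (intro mult_pos_pos) (auto simp: add_pos_pos)
  moreover have "(r+c)*x1*x2 \<ge> 0" using assms by simp
  ultimately have "(r^2+2*r*c)*(x1+x2) + (r+c)*x1*x2 > 0" by linarith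
  then have "(x2-x1)*((r^2+2*r*c)*(x1+x2) + (r+c)*x1*x2) > 0"
    using assms by (intro mult_pos_pos) auto
  with e show ?thesis by linarith
qed

lemma key_minus:
  fixes r c x1 x2 :: real
  assumes "r > 0" "c > 0" "0 \<le> x1" "x1 < x2" "x2 < r"
  defines "s1 \<equiv> 2*r - x1" and "s2 \<equiv> 2*r - x2"
  shows "s1*(s1+4*c)*((r+c)*s2 - r^2) < s2*(s2+4*c)*((r+c)*s1 - r^2)"
proof -
  have e: "s1*(s1+4*c)*((r+c)*s2 - r^2) - s2*(s2+4*c)*((r+c)*s1 - r^2)
     = (x2-x1)*(-(r^2+2*r*c)*(x1+x2) + (r+c)*x1*x2)"
    unfolding s1_def s2_def by (simp add: algebra_simps power2_eq_square)
  have "(r+c)*x1*x2 \<le> (r+c)*(r*x2)"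
  proof -
    have "x1*x2 \<le> r*x2" using assms by (intro mult_right_mono) auto
    then show ?thesis using assms by (simp add: mult.assoc mult_left_mono)
  qed
  also have "\<dots> < (r^2+2*r*c)*(x1+x2)"
    using assms by (simp add: algebra_simps power2_eq_square) (smt (verit) mult_pos_pos mult_nonneg_nonneg)
  finally have "-(r^2+2*r*c)*(x1+x2) + (r+c)*x1*x2 < 0" by linarith
  then have "(x2-x1)*(-(r^2+2*r*c)*(x1+x2) + (r+c)*x1*x2) < 0"
    using assms by (intro mult_pos_neg) auto
  with e show ?thesis by linarith
qed

lemma f_form:
  assumes "E \<noteq> 0" "r > 0" "b > 0" "c > 0"
  shows "LCL E E r b c = (r+b)*((r+b)+4*c)/(4*((r+c)*(r+b) - r^2))"
    and "LCL E E b r c = (r+b)*((r+b)+4*c)/(4*((r+c)*(r+b) - r^2))"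
  using LCL_closed[OF assms(1,2,3,4)] LCL_closed[OF assms(1,3,2,4)]
  by (simp_all add: algebra_simps power2_eq_square)

lemma mono_gen:
  fixes r c :: real and s :: "real \<Rightarrow> real"
  assumes "r > 0" "c > 0"
    and spos: "\<And>h. h \<in> S \<Longrightarrow> s h > r"
    and key: "\<And>x y. x \<in> S \<Longrightarrow> y \<in> S \<Longrightarrow> x < y \<Longrightarrow>
       s x*(s x+4*c)*((r+c)*s y - r^2) < s y*(s y+4*c)*((r+c)*s x - r^2)"
  shows "strict_mono_on S (\<lambda>h. s h*(s h+4*c)/(4*((r+c)*s h - r^2)))"
proof (rule strict_mono_onI)
  fix x y assume xy: "x \<in> S" "y \<in> S" "x < y"
  have Q: "(r+c)*s z - r^2 > 0" if "z \<in> S" for z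
  proof -
    have "r*(s z - r) > 0" "c * s z > 0" using spos[OF that] assms by auto
    moreover have "(r+c)*s z - r^2 = r*(s z - r) + c * s z" by (simp add: algebra_simps power2_eq_square)
    ultimately show ?thesis by linarith
  qed
  show "s x*(s x+4*c)/(4*((r+c)*s x - r^2)) < s y*(s y+4*c)/(4*((r+c)*s y - r^2))"
    using Q[OF xy(1)] Q[OF xy(2)] key[OF xy] by (intro frac_lt) (auto simp: algebra_simps)
qed

theorem proposition2:
  fixes E r R3 :: real
  assumes "E \<noteq> 0" and "R3 > 0" and "r > 0"
  shows "strict_mono_on {0..} (\<lambda>h. LCL E E r (r + h) R3)
       \<and> strict_mono_on {0..} (\<lambda>h. LCL E E (r + h) r R3)
       \<and> strict_mono_on {0..<r} (\<lambda>h. LCL E E r (r - h) R3)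
       \<and> strict_mono_on {0..<r} (\<lambda>h. LCL E E (r - h) r R3)"
proof -
  have P: "strict_mono_on {0..} (\<lambda>h. (2*r+h)*((2*r+h)+4*R3)/(4*((r+R3)*(2*r+h) - r^2)))"
    by (rule mono_gen[where s="\<lambda>h. 2*r+h"]) (use assms key_plus in auto)
  have M: "strict_mono_on {0..<r} (\<lambda>h. (2*r-h)*((2*r-h)+4*R3)/(4*((r+R3)*(2*r-h) - r^2)))"
    by (rule mono_gen[where s="\<lambda>h. 2*r-h"]) (use assms key_minus in auto)
  have e1: "\<And>h. h \<in> {0..} \<Longrightarrow> LCL E E r (r + h) R3 = (2*r+h)*((2*r+h)+4*R3)/(4*((r+R3)*(2*r+h) - r^2))"
   "\<And>h. h \<in> {0..} \<Longrightarrow> LCL E E (r + h) r R3 = (2*r+h)*((2*r+h)+4*R3)/(4*((r+R3)*(2*r+h) - r^2))"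
   using f_form[OF assms(1,3) _ assms(2), of "r+h" for h] assms by (auto simp: algebra_simps)
  have e2: "\<And>h. h \<in> {0..<r} \<Longrightarrow> LCL E E r (r - h) R3 = (2*r-h)*((2*r-h)+4*R3)/(4*((r+R3)*(2*r-h) - r^2))"
   "\<And>h. h \<in> {0..<r} \<Longrightarrow> LCL E E (r - h) r R3 = (2*r-h)*((2*r-h)+4*R3)/(4*((r+R3)*(2*r-h) - r^2))"
   using f_form[OF assms(1,3) _ assms(2), of "r-h" for h] assms by (auto simp: algebra_simps)
  show ?thesis
    using P M e1 e2 unfolding strict_mono_on_def by auto
qed

end
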